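(* Let $\alpha: I\to M$ be a unit-speed curve on an oriented surface $M\subset E^3$ with Darboux frame $\{T,V,U\}$ and curvatures $k_g,k_n,\tau_g$, and assume $(k_n(s),\tau_g(s))\neq(0,0)$ for all $s$. Let $\gamma(s)=\alpha(s)+y_1(s)T(s)+y_2(s)V(s)+y_3(s)U(s)$, with $y_i$ smooth, be an associated curve whose tangent $\gamma'(s)$ is linearly dependent with $U(s)$, i.e. $\gamma'(s)=R(s)U(s)$ with $R(s)\neq0$ for all $s$. Then the following are equivalent: (i) $\gamma$ is a general helix; (ii) $\alpha$ is an isophote curve; (iii) $\alpha$ is a $D_o$-Darboux slant helix.
   Context: $M$ is an oriented surface in Euclidean 3-space $E^3$ and $\alpha:I\to M$ is a unit-speed curve with arc-length parameter $s$. Its Darboux frame $\{T,V,U\}$ consists of the unit tangent $T=\alpha'$, the unit surface normal $U$ of $M$ along $\alpha$, and $V=U\times T$; it satisfies $T'=k_gV+k_nU$, $V'=-k_gT+\tau_gU$, $U'=-k_nT-\tau_gV$, where $k_g,k_n,\tau_g$ are the geodesic curvature, normal curvature and geodesic torsion. A regular curve is a general helix if its unit tangent makes a constant angle with a fixed direction. $\alpha$ is an isophote curve if $\langle U,l\rangle$ is constant for some fixed unit vector $l$. The osculating Darboux vector field is $D_o=\tau_gT-k_nV$; $\alpha$ is a $D_o$-Darboux slant helix if $D_o/\|D_o\|$ makes a constant angle with a fixed unit direction. *)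

theory Defs
  imports "HOL-Analysis.Analysis"
begin

definition smooth_on :: "real set \<Rightarrow> (real \<Rightarrow> 'a::real_normed_vector) \<Rightarrow> bool" where
  "smooth_on I f \<longleftrightarrow>
     (\<forall>n. (((\<lambda>g t. vector_derivative g (at t)) ^^ n) f) differentiable_on I)"

text \<open>Darboux frame along a unit-speed curve alpha on I, with geodesic curvature kg,
  normal curvature kn and geodesic torsion tg; U is the unit surface normal along alpha.\<close>
definition darboux_frame ::
  "real set \<Rightarrow> (real \<Rightarrow> real^3) \<Rightarrow> (real \<Rightarrow> real^3) \<Rightarrow> (real \<Rightarrow> real^3) \<Rightarrow> (real \<Rightarrow> real^3)
   \<Rightarrow> (real \<Rightarrow> real) \<Rightarrow> (real \<Rightarrow> real) \<Rightarrow> (real \<Rightarrow> real) \<Rightarrow> bool" where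
  "darboux_frame I \<alpha> T V U kg kn tg \<longleftrightarrow>
     (\<forall>s\<in>I.
        (\<alpha> has_vector_derivative T s) (at s) \<and>
        norm (T s) = 1 \<and> norm (U s) = 1 \<and> T s \<bullet> U s = 0 \<and>
        V s = cross3 (U s) (T s) \<and>
        (T has_vector_derivative (kg s *\<^sub>R V s + kn s *\<^sub>R U s)) (at s) \<and>
        (V has_vector_derivative (- kg s *\<^sub>R T s + tg s *\<^sub>R U s)) (at s) \<and>
        (U has_vector_derivative (- kn s *\<^sub>R T s - tg s *\<^sub>R V s)) (at s))"

definition general_helix :: "real set \<Rightarrow> (real \<Rightarrow> real^3) \<Rightarrow> bool" where
  "general_helix I \<gamma> \<longleftrightarrow>
     (\<forall>s\<in>I. \<gamma> differentiable (at s) \<and> vector_derivative \<gamma> (at s) \<noteq> 0) \<and>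
     (\<exists>d c. norm d = 1 \<and>
        (\<forall>s\<in>I. (vector_derivative \<gamma> (at s) /\<^sub>R norm (vector_derivative \<gamma> (at s))) \<bullet> d = c))"

definition isophote :: "real set \<Rightarrow> (real \<Rightarrow> real^3) \<Rightarrow> bool" where
  "isophote I U \<longleftrightarrow> (\<exists>l c. norm l = 1 \<and> (\<forall>s\<in>I. U s \<bullet> l = c))"

definition osc_darboux :: "(real \<Rightarrow> real^3) \<Rightarrow> (real \<Rightarrow> real^3) \<Rightarrow> (real \<Rightarrow> real)
   \<Rightarrow> (real \<Rightarrow> real) \<Rightarrow> real \<Rightarrow> real^3" where
  "osc_darboux T V kn tg s = tg s *\<^sub>R T s - kn s *\<^sub>R V s"

definition Do_darboux_slant_helix :: "real set \<Rightarrow> (real \<Rightarrow> real^3) \<Rightarrow> (real \<Rightarrow> real^3)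
   \<Rightarrow> (real \<Rightarrow> real) \<Rightarrow> (real \<Rightarrow> real) \<Rightarrow> bool" where
  "Do_darboux_slant_helix I T V kn tg \<longleftrightarrow>
     (\<exists>d c. norm d = 1 \<and>
        (\<forall>s\<in>I. (osc_darboux T V kn tg s /\<^sub>R norm (osc_darboux T V kn tg s)) \<bullet> d = c))"

end

theory Submission imports Defs begin

definition iterd :: "nat \<Rightarrow> (real \<Rightarrow> 'a::real_normed_vector) \<Rightarrow> real \<Rightarrow> 'a" where
  "iterd n f = (((\<lambda>g t. vector_derivative g (at t)) ^^ n) f)"

lemma iterd_0[simp]: "iterd 0 f = f" by (simp add: iterd_def)

lemma iter_deriv:
  assumes "smooth_on I f" "open I" "s \<in> I"
  shows "((iterd n f) has_vector_derivative (iterd (Suc n) f s)) (at s)"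
proof -
  have "iterd n f differentiable_on I" using assms(1) by (simp add: smooth_on_def iterd_def)
  hence "iterd n f differentiable (at s)" using assms by (simp add: differentiable_on_eq_differentiable_at)
  thus ?thesis by (simp add: iterd_def vector_derivative_works)
qed

lemma iter_cont:
  assumes "smooth_on I f" shows "continuous_on I (iterd n f)"
  using assms by (simp add: smooth_on_def iterd_def differentiable_imp_continuous_on)

lemma deriv_cont_on:
  assumes "\<And>s. s \<in> I \<Longrightarrow> (f has_vector_derivative f' s) (at s)"
  shows "continuous_on I f"
  by (intro continuous_at_imp_continuous_on ballI has_vector_derivative_continuous) (rule assms)

lemma deriv_const_zero:
  assumes "open I" "s \<in> I" "(f has_vector_derivative f') (at s)" "\<And>t. t \<in> I \<Longrightarrow> f t = k"
  shows "f' = 0"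
proof -
  have "((\<lambda>_. k) has_vector_derivative f') (at s)"
    by (rule has_vector_derivative_transform_within_open[OF assms(3,1,2)]) (simp add: assms(4))
  moreover have "((\<lambda>_. k) has_vector_derivative 0) (at s)" by (rule derivative_intros)
  ultimately show ?thesis by (rule vector_derivative_unique_at)
qed

lemma sqconst:
  fixes f :: "real \<Rightarrow> real"
  assumes "is_interval I" "continuous_on I f" "\<And>s. s \<in> I \<Longrightarrow> (f s)^2 = k"
  shows "\<exists>c. \<forall>s\<in>I. f s = c"
proof (cases "I = {}")
  case True then show ?thesis by auto
next
  case False
  then obtain a where a: "a \<in> I" by auto
  have conn: "connected (f ` I)"
    by (intro connected_continuous_image assms(2) is_interval_connected assms(1))
  have "f s = f a" if s: "s \<in> I" for s
  proof (rule ccontr)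
    assume ne: "f s \<noteq> f a"
    have sq: "(f s)^2 = (f a)^2" using assms(3) s a by simp
    hence "f s = f a \<or> f s = - f a" by (simp add: power2_eq_iff)
    hence "f s = - f a" using ne by blast
    hence fa: "f a \<noteq> 0" using ne by auto
    have iv: "\<forall>x\<in>f ` I. \<forall>y\<in>f ` I. \<forall>z. x \<le> z \<longrightarrow> z \<le> y \<longrightarrow> z \<in> f ` I"
      using conn connected_iff_interval by blast
    have fsI: "f s \<in> f ` I" "f a \<in> f ` I" using s a by auto
    have "0 \<in> f ` I"
    proof (cases "f a < 0")
      case True
      then have "f a \<le> 0" "0 \<le> f s" using \<open>f s = - f a\<close> by auto
      then show ?thesis using iv fsI by blast
    next
      case False
      then have "f s \<le> 0" "0 \<le> f a" using \<open>f s = - f a\<close> by auto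
      then show ?thesis using iv fsI by blast
    qed
    then obtain t where t: "t \<in> I" "f t = 0" by auto
    have "(f a)^2 = 0" using assms(3)[OF t(1)] assms(3)[OF a] t(2) by simp
    thus False using fa by simp
  qed
  thus ?thesis by blast
qed

lemma V1:
  fixes U U1 v :: "real^3"
  assumes "U \<bullet> U = 1" "U \<bullet> U1 = 0"
  shows "(U1 \<bullet> U1) *\<^sub>R v = ((U1 \<bullet> U1) * (v \<bullet> U)) *\<^sub>R U + (v \<bullet> U1) *\<^sub>R U1 + (v \<bullet> cross3 U U1) *\<^sub>R cross3 U U1"
  using assms unfolding cross3_def inner_vec_def sum_3 vec_eq_iff forall_3
  by (simp add: vector_def) algebra

lemma bb_cross: "bounded_bilinear (cross3 :: real^3 \<Rightarrow> real^3 \<Rightarrow> real^3)"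
  using bilinear_conv_bounded_bilinear[THEN iffD1, OF bilinear_cross] .

lemmas d_inner = bounded_bilinear.has_vector_derivative[OF bounded_bilinear_inner]
lemmas d_cross = bounded_bilinear.has_vector_derivative[OF bb_cross]


lemma partBC:
  fixes U U1 U2 :: "real \<Rightarrow> real^3"
  assumes I: "open I" "is_interval I" "I \<noteq> {}"
    and dU: "\<And>s. s\<in>I \<Longrightarrow> (U has_vector_derivative U1 s) (at s)"
    and dU1: "\<And>s. s\<in>I \<Longrightarrow> (U1 has_vector_derivative U2 s) (at s)"
    and cU2: "continuous_on I U2"
    and unit: "\<And>s. s\<in>I \<Longrightarrow> U s \<bullet> U s = 1"
    and nz: "\<And>s. s\<in>I \<Longrightarrow> U1 s \<noteq> 0"
  shows "isophote I U \<longleftrightarrow> (\<exists>d c. norm d = 1 \<and>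
     (\<forall>s\<in>I. (cross3 (U s) (U1 s) /\<^sub>R norm (cross3 (U s) (U1 s))) \<bullet> d = c))"
proof -
  have cU: "continuous_on I U" by (rule deriv_cont_on[OF dU])
  have cU1: "continuous_on I U1" by (rule deriv_cont_on[OF dU1])
  have uU1: "U s \<bullet> U1 s = 0" if s: "s \<in> I" for s
  proof -
    have "((\<lambda>t. U t \<bullet> U t) has_vector_derivative (U s \<bullet> U1 s + U1 s \<bullet> U s)) (at s)"
      by (rule d_inner[OF dU[OF s] dU[OF s]])
    hence "U s \<bullet> U1 s + U1 s \<bullet> U s = 0" by (rule deriv_const_zero[OF I(1) s _ unit])
    thus ?thesis by (simp add: inner_commute)
  qed
  have UU2: "U s \<bullet> U2 s = - (U1 s \<bullet> U1 s)" if s: "s \<in> I" for s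
  proof -
    have "((\<lambda>t. U t \<bullet> U1 t) has_vector_derivative (U s \<bullet> U2 s + U1 s \<bullet> U1 s)) (at s)"
      by (rule d_inner[OF dU[OF s] dU1[OF s]])
    hence "U s \<bullet> U2 s + U1 s \<bullet> U1 s = 0" by (rule deriv_const_zero[OF I(1) s _ uU1])
    thus ?thesis by simp
  qed
  define n where "n s = norm (U1 s)" for s
  define X where "X s = cross3 (U s) (U1 s)" for s
  have npos: "n s > 0" if "s \<in> I" for s using nz that by (simp add: n_def)
  have rho: "U1 s \<bullet> U1 s = (n s)^2" for s by (simp add: n_def power2_norm_eq_inner)
  have nU: "norm (U s) = 1" if "s \<in> I" for s using unit[OF that] by (simp add: norm_eq_sqrt_inner)
  have nX: "norm (X s) = n s" if s: "s \<in> I" for s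
  proof -
    have "(norm (X s))^2 + (U s \<bullet> U1 s)^2 = (norm (U s) * norm (U1 s))^2"
      unfolding X_def by (rule norm_cross_dot)
    hence "(norm (X s))^2 = (n s)^2" using uU1[OF s] nU[OF s] by (simp add: n_def)
    thus ?thesis by (rule power2_eq_imp_eq[OF _ norm_ge_zero less_imp_le[OF npos[OF s]]])
  qed
  have XX: "X s \<bullet> X s = (n s)^2" if "s \<in> I" for s
    using power2_norm_eq_inner[of "X s", symmetric, unfolded nX[OF that]] .
  have dX: "(X has_vector_derivative cross3 (U s) (U2 s)) (at s)" if s: "s \<in> I" for s
    using d_cross[OF dU[OF s] dU1[OF s]] unfolding X_def[abs_def] cross_refl add_0_right .
  have cX: "continuous_on I X" by (rule deriv_cont_on[OF dX])
  have cn: "continuous_on I n" unfolding n_def[abs_def] by (rule continuous_on_norm[OF cU1])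
  have Wn: "X s /\<^sub>R norm (X s) = inverse (n s) *\<^sub>R X s" if "s \<in> I" for s
    using nX[OF that] by (simp add: divide_inverse_commute)
  have V1s: "(n s)^2 *\<^sub>R v = ((n s)^2 * (v \<bullet> U s)) *\<^sub>R U s + (v \<bullet> U1 s) *\<^sub>R U1 s + (v \<bullet> X s) *\<^sub>R X s"
    if s: "s \<in> I" for s v
    using V1[OF unit[OF s] uU1[OF s], of v] by (simp add: rho X_def)
  show ?thesis
  proof
    assume "isophote I U"
    then obtain l c where l: "norm l = 1" "\<And>s. s \<in> I \<Longrightarrow> U s \<bullet> l = c"
      unfolding isophote_def by blast
    have ll: "l \<bullet> l = 1" using l(1) by (simp add: norm_eq_sqrt_inner)
    have U1l: "U1 s \<bullet> l = 0" if s: "s \<in> I" for s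
    proof -
      have "((\<lambda>t. U t \<bullet> l) has_vector_derivative (U s \<bullet> 0 + U1 s \<bullet> l)) (at s)"
        by (rule d_inner[OF dU[OF s]]) simp
      thus ?thesis using deriv_const_zero[OF I(1) s] l(2) by auto
    qed
    have sq: "((X s \<bullet> l) / n s)^2 = 1 - c^2" if s: "s \<in> I" for s
    proof -
      have "((n s)^2 *\<^sub>R l) \<bullet> l = (((n s)^2 * (l \<bullet> U s)) *\<^sub>R U s + (l \<bullet> U1 s) *\<^sub>R U1 s + (l \<bullet> X s) *\<^sub>R X s) \<bullet> l"
        using V1s[OF s, of l] by simp
      hence "(n s)^2 = (n s)^2 * c^2 + (X s \<bullet> l)^2"
        using ll U1l[OF s] l(2)[OF s]
        by (simp add: inner_add_left inner_add_right inner_commute power2_eq_square)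
      thus ?thesis using npos[OF s] by (simp add: power_divide field_simps)
    qed
    have "continuous_on I (\<lambda>s. (X s \<bullet> l) / n s)"
      using npos by (intro continuous_intros cX cn) (metis less_irrefl)
    hence "\<exists>c. \<forall>s\<in>I. (X s \<bullet> l) / n s = c" by (rule sqconst[OF I(2) _ sq])
    then obtain c' where c': "\<And>s. s \<in> I \<Longrightarrow> (X s \<bullet> l) / n s = c'" by blast
    show "\<exists>d c. norm d = 1 \<and> (\<forall>s\<in>I. (cross3 (U s) (U1 s) /\<^sub>R norm (cross3 (U s) (U1 s))) \<bullet> d = c)"
    proof (intro exI conjI ballI)
      show "norm l = 1" by fact
      fix s assume s: "s \<in> I"
      show "(cross3 (U s) (U1 s) /\<^sub>R norm (cross3 (U s) (U1 s))) \<bullet> l = c'"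
      proof -
        have "(X s /\<^sub>R norm (X s)) \<bullet> l = (X s \<bullet> l) / n s" unfolding Wn[OF s]
          by (simp add: divide_inverse)
        thus ?thesis using c'[OF s] unfolding X_def by simp
      qed
    qed
  next
    assume "\<exists>d c. norm d = 1 \<and> (\<forall>s\<in>I. (cross3 (U s) (U1 s) /\<^sub>R norm (cross3 (U s) (U1 s))) \<bullet> d = c)"
    then obtain d c where d: "norm d = 1"
      and dc0: "\<And>s. s \<in> I \<Longrightarrow> (cross3 (U s) (U1 s) /\<^sub>R norm (cross3 (U s) (U1 s))) \<bullet> d = c"
      by blast
    have dd: "d \<bullet> d = 1" using d by (simp add: norm_eq_sqrt_inner)
    define u where "u s = U s \<bullet> d" for s
    define p where "p s = U1 s \<bullet> d" for s
    define w where "w s = X s \<bullet> d" for s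
    define e where "e s = X s \<bullet> U2 s" for s
    define b where "b s = U1 s \<bullet> U2 s" for s
    have wc: "w s = c * n s" if s: "s \<in> I" for s
    proof -
      have "(inverse (n s) *\<^sub>R X s) \<bullet> d = c" using dc0[OF s] Wn[OF s] unfolding X_def by simp
      hence "inverse (n s) * w s = c" by (simp add: w_def)
      thus ?thesis using npos[OF s] by (simp add: field_simps)
    qed
    have G: "(n s)^2 = (n s)^2 * (u s)^2 + (p s)^2 + (w s)^2" if s: "s \<in> I" for s
    proof -
      have "((n s)^2 *\<^sub>R d) \<bullet> d = (((n s)^2 * (d \<bullet> U s)) *\<^sub>R U s + (d \<bullet> U1 s) *\<^sub>R U1 s + (d \<bullet> X s) *\<^sub>R X s) \<bullet> d"
        using V1s[OF s, of d] by simp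
      thus ?thesis using dd
        by (simp add: inner_add_left inner_add_right inner_commute power2_eq_square u_def p_def w_def)
    qed
    have H: "(n s)^2 * (U2 s \<bullet> d) = - ((n s)^2 * (n s)^2 * u s) + b s * p s + e s * w s" if s: "s \<in> I" for s
    proof -
      have "((n s)^2 *\<^sub>R U2 s) \<bullet> d = (((n s)^2 * (U2 s \<bullet> U s)) *\<^sub>R U s + (U2 s \<bullet> U1 s) *\<^sub>R U1 s + (U2 s \<bullet> X s) *\<^sub>R X s) \<bullet> d"
        using V1s[OF s, of "U2 s"] by simp
      moreover have "U2 s \<bullet> U s = - ((n s)^2)" using UU2[OF s] rho[of s] by (simp add: inner_commute)
      ultimately show ?thesis
        by (simp add: inner_add_left inner_add_right inner_diff_right inner_commute power2_eq_square u_def p_def w_def e_def b_def)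
    qed
    have K: "(n s)^2 *\<^sub>R cross3 (U s) (U2 s) = b s *\<^sub>R X s - e s *\<^sub>R U1 s" if s: "s \<in> I" for s
    proof -
      have "cross3 (U s) ((n s)^2 *\<^sub>R U2 s) = cross3 (U s) (((n s)^2 * (U2 s \<bullet> U s)) *\<^sub>R U s + (U2 s \<bullet> U1 s) *\<^sub>R U1 s + (U2 s \<bullet> X s) *\<^sub>R X s)"
        using V1s[OF s, of "U2 s"] by simp
      moreover have "cross3 (U s) (X s) = - U1 s"
        unfolding X_def using Lagrange[of "U s" "U s" "U1 s"] uU1[OF s] unit[OF s] by simp
      ultimately show ?thesis
        by (simp add: cross_add_right cross_mult_right inner_commute e_def b_def X_def)
    qed
    have Kd: "(n s)^2 * (cross3 (U s) (U2 s) \<bullet> d) = b s * w s - e s * p s" if s: "s \<in> I" for s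
    proof -
      have "((n s)^2 *\<^sub>R cross3 (U s) (U2 s)) \<bullet> d = (b s *\<^sub>R X s - e s *\<^sub>R U1 s) \<bullet> d"
        using K[OF s] by simp
      thus ?thesis by (simp add: inner_diff_left w_def p_def)
    qed
    have du: "(u has_vector_derivative p s) (at s)" if s: "s \<in> I" for s
      using d_inner[OF dU[OF s], of "\<lambda>_. d" 0] unfolding u_def[abs_def] p_def by simp
    have dp: "(p has_vector_derivative (U2 s \<bullet> d)) (at s)" if s: "s \<in> I" for s
      using d_inner[OF dU1[OF s], of "\<lambda>_. d" 0] unfolding p_def[abs_def] by simp
    have dw: "(w has_vector_derivative (cross3 (U s) (U2 s) \<bullet> d)) (at s)" if s: "s \<in> I" for s
      using d_inner[OF dX[OF s], of "\<lambda>_. d" 0] unfolding w_def[abs_def] by simp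
    have ep: "e s * p s = 0" if s: "s \<in> I" for s
    proof (cases "c = 0")
      case True
      have "cross3 (U s) (U2 s) \<bullet> d = 0"
        by (rule deriv_const_zero[OF I(1) s dw[OF s], of 0]) (simp add: wc True)
      thus ?thesis using Kd[OF s] wc[OF s] True by simp
    next
      case False
      define w' where "w' = cross3 (U s) (U2 s) \<bullet> d"
      have dh: "((\<lambda>t. w t * w t - c^2 * (U1 t \<bullet> U1 t)) has_vector_derivative
          ((w s * w' + w' * w s) - (c^2 * (U1 s \<bullet> U2 s + U2 s \<bullet> U1 s) + 0 * (U1 s \<bullet> U1 s)))) (at s)"
        unfolding w'_def
        by (intro has_vector_derivative_diff has_vector_derivative_mult dw[OF s] d_inner dU1[OF s]
            has_vector_derivative_const)
      have "(w s * w' + w' * w s) - (c^2 * (U1 s \<bullet> U2 s + U2 s \<bullet> U1 s) + 0 * (U1 s \<bullet> U1 s)) = 0"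
        by (rule deriv_const_zero[OF I(1) s dh, of 0]) (simp add: wc rho power2_eq_square)
      hence ww: "w s * w' = c^2 * b s" by (simp add: b_def inner_commute mult.commute)
      have nw: "(n s)^2 * w' = b s * w s - e s * p s" using Kd[OF s] by (simp add: w'_def)
      have "w s * (e s * p s) = 0" using ww nw wc[OF s] by algebra
      moreover have "w s \<noteq> 0" using wc[OF s] False npos[OF s] by simp
      ultimately show ?thesis by simp
    qed
    show "isophote I U"
    proof (cases "c^2 = 1")
      case True
      have "u s = 0" if s: "s \<in> I" for s
      proof -
        have "(n s)^2 * (u s)^2 + (p s)^2 = 0" using G[OF s] wc[OF s] True
          by (simp add: power_mult_distrib)
        hence "(n s)^2 * (u s)^2 = 0"
          by (metis add_nonneg_eq_0_iff zero_le_power2 mult_nonneg_nonneg)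
        thus ?thesis using npos[OF s] by simp
      qed
      thus ?thesis unfolding isophote_def using d by (auto simp: u_def)
    next
      case c1: False
      show ?thesis
      proof (cases "\<forall>s\<in>I. e s = 0")
        case True
        define r where "r t = U1 t \<bullet> U1 t" for t
        have nr: "n = (\<lambda>t. sqrt (r t))" by (simp add: fun_eq_iff n_def r_def norm_eq_sqrt_inner)
        define Wf where "Wf t = inverse (n t) *\<^sub>R X t" for t
        have dWf: "(Wf has_vector_derivative 0) (at s within I)" if s: "s \<in> I" for s
        proof -
          have rpos: "0 < r s" using npos[OF s] rho[of s] by (simp add: r_def)
          have "(r has_vector_derivative (U1 s \<bullet> U2 s + U2 s \<bullet> U1 s)) (at s)"
            unfolding r_def[abs_def] by (rule d_inner[OF dU1[OF s] dU1[OF s]])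
          hence dr: "(r has_real_derivative (2 * b s)) (at s)"
            by (simp add: has_real_derivative_iff_has_vector_derivative b_def inner_commute)
          have dn: "((\<lambda>t. sqrt (r t)) has_real_derivative (inverse (sqrt (r s)) / 2 * (2 * b s))) (at s)"
            by (rule DERIV_chain2[OF DERIV_real_sqrt[OF rpos] dr])
          have "sqrt (r s) \<noteq> 0" using rpos by simp
          from DERIV_inverse_fun[OF dn this]
          obtain m where dinv: "((\<lambda>t. inverse (n t)) has_real_derivative m) (at s)"
            unfolding nr by blast
          have dW: "(Wf has_vector_derivative (inverse (n s) *\<^sub>R cross3 (U s) (U2 s) + m *\<^sub>R X s)) (at s)"
            unfolding Wf_def[abs_def] by (rule has_vector_derivative_scaleR[OF dinv dX[OF s]])
          have "(n s)^2 *\<^sub>R cross3 (U s) (U2 s) = b s *\<^sub>R X s" using K[OF s] True s by simp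
          hence "cross3 (U s) (U2 s) = (b s / (n s)^2) *\<^sub>R X s" using npos[OF s]
            by (metis (no_types, lifting) divide_inverse_commute less_irrefl power_not_zero scaleR_scaleR
                inverse_nonzero_iff_nonzero right_inverse scaleR_one)
          hence W'eq: "inverse (n s) *\<^sub>R cross3 (U s) (U2 s) + m *\<^sub>R X s = (inverse (n s) * (b s / (n s)^2) + m) *\<^sub>R X s"
            by (simp add: scaleR_add_left)
          define \<mu> where "\<mu> = inverse (n s) * (b s / (n s)^2) + m"
          have dW2: "(Wf has_vector_derivative \<mu> *\<^sub>R X s) (at s)" using dW W'eq by (simp add: \<mu>_def)
          have WW: "Wf t \<bullet> Wf t = 1" if t: "t \<in> I" for t
            using XX[OF t] npos[OF t] by (simp add: Wf_def power2_eq_square field_simps)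
          have "Wf s \<bullet> (\<mu> *\<^sub>R X s) + (\<mu> *\<^sub>R X s) \<bullet> Wf s = 0"
            by (rule deriv_const_zero[OF I(1) s d_inner[OF dW2 dW2] WW])
          hence "2 * \<mu> * (Wf s \<bullet> X s) = 0" by (simp add: inner_commute)
          moreover have "Wf s \<bullet> X s = n s" using XX[OF s] npos[OF s]
            by (simp add: Wf_def power2_eq_square field_simps)
          ultimately have "\<mu> = 0" using npos[OF s] by simp
          thus ?thesis using dW2 has_vector_derivative_at_within by simp
        qed
        then obtain l where l: "\<And>s. s \<in> I \<Longrightarrow> Wf s = l"
          using has_vector_derivative_zero_constant[OF is_interval_convex[OF I(2)]] by blast
        obtain s1 where s1: "s1 \<in> I" using I(3) by blast
        have "norm l = 1" using l[OF s1] nX[OF s1] npos[OF s1] by (auto simp: Wf_def)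
        moreover have "U s \<bullet> l = 0" if s: "s \<in> I" for s
          using l[OF s, symmetric] by (simp add: Wf_def X_def dot_cross_self)
        ultimately show ?thesis unfolding isophote_def by blast
      next
        case False
        then obtain s0 where s0: "s0 \<in> I" "e s0 \<noteq> 0" by blast
        define S where "S = {s\<in>I. e s \<noteq> 0}"
        have ce: "continuous_on I e" unfolding e_def[abs_def] by (intro continuous_intros cX cU2)
        have cp: "continuous_on I p" unfolding p_def[abs_def] by (intro continuous_intros cU1)
        have cu: "continuous_on I u" unfolding u_def[abs_def] by (intro continuous_intros cU)
        have "open (I \<inter> e -` (-{0}))" by (rule continuous_open_preimage[OF ce I(1)]) auto
        moreover have "I \<inter> e -` (-{0}) = S" by (auto simp: S_def)
        ultimately have openS: "open S" by simp
        have onS: "p s = 0 \<and> e s * c = (n s)^3 * u s" if sS: "s \<in> S" for s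
        proof -
          have sI: "s \<in> I" using sS by (simp add: S_def)
          have p0: "p t = 0" if "t \<in> S" for t using ep[of t] that by (simp add: S_def)
          have "U2 s \<bullet> d = 0" by (rule deriv_const_zero[OF openS sS dp[OF sI] p0])
          hence "0 = - ((n s)^2 * (n s)^2 * u s) + e s * (c * n s)" using H[OF sI] p0[OF sS] wc[OF sI] by simp
          hence "n s * (e s * c) = n s * ((n s)^3 * u s)" by algebra
          hence "e s * c = (n s)^3 * u s" using npos[OF sI] by (subst (asm) mult_left_cancel) auto
          thus ?thesis using p0[OF sS] by simp
        qed
        have cnz: "c \<noteq> 0"
        proof
          assume c0: "c = 0"
          have "s0 \<in> S" using s0 by (simp add: S_def)
          from onS[OF this] c0 have "u s0 = 0" "p s0 = 0" using npos[OF s0(1)] by auto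
          hence "(n s0)^2 = 0" using G[OF s0(1)] wc[OF s0(1)] c0 by simp
          thus False using npos[OF s0(1)] by simp
        qed
        have Seq: "S = {s\<in>I. (p s)^2 + (e s * c - (n s)^3 * u s)^2 = 0}"
        proof
          show "S \<subseteq> {s\<in>I. (p s)^2 + (e s * c - (n s)^3 * u s)^2 = 0}"
            using onS by (auto simp: S_def)
        next
          show "{s\<in>I. (p s)^2 + (e s * c - (n s)^3 * u s)^2 = 0} \<subseteq> S"
          proof
            fix s assume "s \<in> {s\<in>I. (p s)^2 + (e s * c - (n s)^3 * u s)^2 = 0}"
            hence sI: "s \<in> I" and p0: "p s = 0" and ec: "e s * c = (n s)^3 * u s"
              by (auto simp: sum_power2_eq_zero_iff)
            have "(n s)^2 * 1 = (n s)^2 * ((u s)^2 + c^2)" using G[OF sI] p0 wc[OF sI]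
              by (simp add: power_mult_distrib algebra_simps)
            hence "(u s)^2 + c^2 = 1" using npos[OF sI] by (metis mult_left_cancel power_not_zero less_irrefl)
            hence "u s \<noteq> 0" using c1 by auto
            hence "e s * c \<noteq> 0" using ec npos[OF sI] by simp
            thus "s \<in> S" using sI by (simp add: S_def)
          qed
        qed
        have "closedin (top_of_set I) S" unfolding Seq
          by (rule continuous_closedin_preimage_constant) (intro continuous_intros cp ce cn cu)
        moreover have "openin (top_of_set I) S" using openin_open_eq[OF I(1)] openS by (auto simp: S_def)
        moreover have "connected I" by (rule is_interval_connected[OF I(2)])
        ultimately have "S = {} \<or> S = I" using connected_clopen by blast
        moreover have "s0 \<in> S" using s0 by (simp add: S_def)
        ultimately have SI: "S = I" by blast
        have "(u has_vector_derivative 0) (at s within I)" if s: "s \<in> I" for s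
        proof -
          have "e s \<noteq> 0" using SI s by (auto simp: S_def)
          hence "p s = 0" using ep[OF s] by simp
          thus ?thesis using du[OF s] has_vector_derivative_at_within by simp
        qed
        then obtain k where "\<And>s. s \<in> I \<Longrightarrow> u s = k"
          using has_vector_derivative_zero_constant[OF is_interval_convex[OF I(2)]] by blast
        thus ?thesis unfolding isophote_def using d by (auto simp: u_def)
      qed
    qed
  qed
qed


theorem theorem3p22:
  fixes I :: "real set"
    and \<alpha> T V U \<gamma> :: "real \<Rightarrow> real^3"
    and kg kn tg y1 y2 y3 R :: "real \<Rightarrow> real"
  assumes I: "open I" "is_interval I" "I \<noteq> {}"
    and smooth: "smooth_on I \<alpha>" "smooth_on I U"
    and frame: "darboux_frame I \<alpha> T V U kg kn tg"
    and nondeg: "\<forall>s\<in>I. (kn s, tg s) \<noteq> (0, 0)"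
    and ysmooth: "smooth_on I y1" "smooth_on I y2" "smooth_on I y3"
    and gamma: "\<gamma> = (\<lambda>s. \<alpha> s + y1 s *\<^sub>R T s + y2 s *\<^sub>R V s + y3 s *\<^sub>R U s)"
    and tangent: "\<forall>s\<in>I. (\<gamma> has_vector_derivative R s *\<^sub>R U s) (at s) \<and> R s \<noteq> 0"
  shows "(general_helix I \<gamma> \<longleftrightarrow> isophote I U) \<and>
         (isophote I U \<longleftrightarrow> Do_darboux_slant_helix I T V kn tg)"
proof -
  note fr = frame[unfolded darboux_frame_def]
  have dA: "(\<alpha> has_vector_derivative T s) (at s)" if "s \<in> I" for s using fr that by blast
  have nT: "norm (T s) = 1" if "s \<in> I" for s using fr that by blast
  have nU: "norm (U s) = 1" if "s \<in> I" for s using fr that by blast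
  have TU: "T s \<bullet> U s = 0" if "s \<in> I" for s using fr that by blast
  have Vdef: "V s = cross3 (U s) (T s)" if "s \<in> I" for s using fr that by blast
  have dT: "(T has_vector_derivative (kg s *\<^sub>R V s + kn s *\<^sub>R U s)) (at s)" if "s \<in> I" for s
    using fr that by blast
  have dV: "(V has_vector_derivative (- kg s *\<^sub>R T s + tg s *\<^sub>R U s)) (at s)" if "s \<in> I" for s
    using fr that by blast
  have dUf: "(U has_vector_derivative (- kn s *\<^sub>R T s - tg s *\<^sub>R V s)) (at s)" if "s \<in> I" for s
    using fr that by blast
  have TT: "T s \<bullet> T s = 1" if "s \<in> I" for s using nT[OF that] by (simp add: norm_eq_sqrt_inner)
  have UU: "U s \<bullet> U s = 1" if "s \<in> I" for s using nU[OF that] by (simp add: norm_eq_sqrt_inner)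
  have UT: "U s \<bullet> T s = 0" if "s \<in> I" for s using TU[OF that] by (simp add: inner_commute)
  have VU: "V s \<bullet> U s = 0" if "s \<in> I" for s using Vdef[OF that] dot_cross_self(4)[of "U s" "T s"] by simp
  have VT: "V s \<bullet> T s = 0" if "s \<in> I" for s using Vdef[OF that] dot_cross_self(3)[of "U s" "T s"] by simp
  have UV: "U s \<bullet> V s = 0" if "s \<in> I" for s using VU[OF that] by (simp add: inner_commute)
  have TV: "T s \<bullet> V s = 0" if "s \<in> I" for s using VT[OF that] by (simp add: inner_commute)
  have VV: "V s \<bullet> V s = 1" if s: "s \<in> I" for s
  proof -
    have "(norm (cross3 (U s) (T s)))^2 + (U s \<bullet> T s)^2 = (norm (U s) * norm (T s))^2"
      by (rule norm_cross_dot)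
    hence "(norm (V s))^2 = 1" using Vdef[OF s] UT[OF s] nU[OF s] nT[OF s] by simp
    thus ?thesis by (simp add: power2_norm_eq_inner)
  qed
  define U1 where "U1 = iterd (Suc 0) U"
  define U2 where "U2 = iterd (Suc (Suc 0)) U"
  have dU: "(U has_vector_derivative U1 s) (at s)" if "s \<in> I" for s
    using iter_deriv[OF smooth(2) I(1) that, of 0] by (simp add: U1_def)
  have dU1: "(U1 has_vector_derivative U2 s) (at s)" if "s \<in> I" for s
    using iter_deriv[OF smooth(2) I(1) that, of "Suc 0"] by (simp add: U1_def U2_def)
  have cU2: "continuous_on I U2" unfolding U2_def by (rule iter_cont[OF smooth(2)])
  have cU1: "continuous_on I U1" unfolding U1_def by (rule iter_cont[OF smooth(2)])
  have U1eq: "U1 s = - kn s *\<^sub>R T s - tg s *\<^sub>R V s" if "s \<in> I" for s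
    by (rule vector_derivative_unique_at[OF dU[OF that] dUf[OF that]])
  have kn_eq: "kn s = - (U1 s \<bullet> T s)" if s: "s \<in> I" for s
    using U1eq[OF s] TT[OF s] VT[OF s] by (simp add: inner_diff_left)
  have tg_eq: "tg s = - (U1 s \<bullet> V s)" if s: "s \<in> I" for s
    using U1eq[OF s] TV[OF s] VV[OF s] by (simp add: inner_diff_left)
  have U1U1: "U1 s \<bullet> U1 s = (kn s)^2 + (tg s)^2" if s: "s \<in> I" for s
    using U1eq[OF s] TT[OF s] VV[OF s] TV[OF s] VT[OF s]
    by (simp add: inner_diff_left inner_diff_right power2_eq_square)
  have U1nz: "U1 s \<noteq> 0" if s: "s \<in> I" for s
  proof
    assume "U1 s = 0"
    hence "(kn s)^2 + (tg s)^2 = 0" using U1U1[OF s] by simp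
    thus False using nondeg s by (auto simp add: sum_power2_eq_zero_iff)
  qed
  have osc: "osc_darboux T V kn tg s = cross3 (U s) (U1 s)" if s: "s \<in> I" for s
  proof -
    have "cross3 (U s) (V s) = - T s"
      unfolding Vdef[OF s] using Lagrange[of "U s" "U s" "T s"] UT[OF s] UU[OF s] by simp
    thus ?thesis unfolding U1eq[OF s] osc_darboux_def
      by (simp add: Cross3.right_diff_distrib cross_mult_right Vdef[OF s])
  qed
  have BC: "isophote I U \<longleftrightarrow> Do_darboux_slant_helix I T V kn tg"
  proof -
    have "Do_darboux_slant_helix I T V kn tg \<longleftrightarrow> (\<exists>d c. norm d = 1 \<and>
     (\<forall>s\<in>I. (cross3 (U s) (U1 s) /\<^sub>R norm (cross3 (U s) (U1 s))) \<bullet> d = c))"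
      unfolding Do_darboux_slant_helix_def using osc by auto
    thus ?thesis using partBC[OF I dU dU1 cU2 UU U1nz] by simp
  qed
  define Y1 where "Y1 = iterd (Suc 0) y1"
  define Y2 where "Y2 = iterd (Suc 0) y2"
  define Y3 where "Y3 = iterd (Suc 0) y3"
  have dy1: "(y1 has_real_derivative Y1 s) (at s)" if "s \<in> I" for s
    using iter_deriv[OF ysmooth(1) I(1) that, of 0]
    by (simp add: Y1_def has_real_derivative_iff_has_vector_derivative)
  have dy2: "(y2 has_real_derivative Y2 s) (at s)" if "s \<in> I" for s
    using iter_deriv[OF ysmooth(2) I(1) that, of 0]
    by (simp add: Y2_def has_real_derivative_iff_has_vector_derivative)
  have dy3: "(y3 has_real_derivative Y3 s) (at s)" if "s \<in> I" for s
    using iter_deriv[OF ysmooth(3) I(1) that, of 0]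
    by (simp add: Y3_def has_real_derivative_iff_has_vector_derivative)
  have Req: "R s = y1 s * kn s + y2 s * tg s + Y3 s" if s: "s \<in> I" for s
  proof -
    have dG: "(\<gamma> has_vector_derivative (T s + (y1 s *\<^sub>R (kg s *\<^sub>R V s + kn s *\<^sub>R U s) + Y1 s *\<^sub>R T s)
       + (y2 s *\<^sub>R (- kg s *\<^sub>R T s + tg s *\<^sub>R U s) + Y2 s *\<^sub>R V s)
       + (y3 s *\<^sub>R (- kn s *\<^sub>R T s - tg s *\<^sub>R V s) + Y3 s *\<^sub>R U s))) (at s)"
      unfolding gamma
      by (intro has_vector_derivative_add has_vector_derivative_scaleR dA[OF s] dT[OF s] dV[OF s]
          dUf[OF s] dy1[OF s] dy2[OF s] dy3[OF s])
    have "R s *\<^sub>R U s = T s + (y1 s *\<^sub>R (kg s *\<^sub>R V s + kn s *\<^sub>R U s) + Y1 s *\<^sub>R T s)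
       + (y2 s *\<^sub>R (- kg s *\<^sub>R T s + tg s *\<^sub>R U s) + Y2 s *\<^sub>R V s)
       + (y3 s *\<^sub>R (- kn s *\<^sub>R T s - tg s *\<^sub>R V s) + Y3 s *\<^sub>R U s)"
      using vector_derivative_unique_at[OF conjunct1[OF tangent[rule_format, OF s]] dG] .
    hence "(R s *\<^sub>R U s) \<bullet> U s = (T s + (y1 s *\<^sub>R (kg s *\<^sub>R V s + kn s *\<^sub>R U s) + Y1 s *\<^sub>R T s)
       + (y2 s *\<^sub>R (- kg s *\<^sub>R T s + tg s *\<^sub>R U s) + Y2 s *\<^sub>R V s)
       + (y3 s *\<^sub>R (- kn s *\<^sub>R T s - tg s *\<^sub>R V s) + Y3 s *\<^sub>R U s)) \<bullet> U s" by simp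
    thus ?thesis using UU[OF s] TU[OF s] VU[OF s]
      by (simp add: inner_add_left inner_diff_left)
  qed
  have cT: "continuous_on I T" by (rule deriv_cont_on[OF dT])
  have cV: "continuous_on I V" by (rule deriv_cont_on[OF dV])
  have cU: "continuous_on I U" by (rule deriv_cont_on[OF dU])
  have cy1: "continuous_on I y1" using iter_cont[OF ysmooth(1), of 0] by simp
  have cy2: "continuous_on I y2" using iter_cont[OF ysmooth(2), of 0] by simp
  have cY3: "continuous_on I Y3" unfolding Y3_def by (rule iter_cont[OF ysmooth(3)])
  have cR: "continuous_on I R"
  proof -
    have "continuous_on I (\<lambda>s. y1 s * (- (U1 s \<bullet> T s)) + y2 s * (- (U1 s \<bullet> V s)) + Y3 s)"
      by (intro continuous_intros cy1 cy2 cY3 cU1 cT cV)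
    moreover have "\<And>s. s \<in> I \<Longrightarrow> y1 s * (- (U1 s \<bullet> T s)) + y2 s * (- (U1 s \<bullet> V s)) + Y3 s = R s"
      using Req kn_eq tg_eq by simp
    ultimately show ?thesis by (rule continuous_on_cong[THEN iffD1, OF refl, rotated])
  qed
  have Rnz: "R s \<noteq> 0" if "s \<in> I" for s using conjunct2[OF tangent[rule_format, OF that]] .
  have csig: "continuous_on I (\<lambda>s. R s / \<bar>R s\<bar>)"
    using Rnz by (intro continuous_intros cR) auto
  have "\<exists>c. \<forall>s\<in>I. R s / \<bar>R s\<bar> = c"
    by (rule sqconst[OF I(2) csig, of 1]) (simp add: Rnz power_divide)
  then obtain \<sigma> where sig: "\<And>s. s \<in> I \<Longrightarrow> R s / \<bar>R s\<bar> = \<sigma>" by blast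
  obtain s1 where s1: "s1 \<in> I" using I(3) by blast
  have sig2: "\<sigma> * \<sigma> = 1" using sig[OF s1] Rnz[OF s1] by (auto simp: abs_if)
  have vd: "vector_derivative \<gamma> (at s) = R s *\<^sub>R U s" if "s \<in> I" for s
    by (rule vector_derivative_at[OF conjunct1[OF tangent[rule_format, OF that]]])
  have unitT: "vector_derivative \<gamma> (at s) /\<^sub>R norm (vector_derivative \<gamma> (at s)) = \<sigma> *\<^sub>R U s"
    if s: "s \<in> I" for s
    using vd[OF s] nU[OF s] sig[OF s, symmetric] by (simp add: divide_inverse_commute)
  have A: "general_helix I \<gamma> \<longleftrightarrow> isophote I U"
  proof
    assume "general_helix I \<gamma>"
    then obtain d c where d: "norm d = 1" "\<And>s. s \<in> I \<Longrightarrow>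
        (vector_derivative \<gamma> (at s) /\<^sub>R norm (vector_derivative \<gamma> (at s))) \<bullet> d = c"
      unfolding general_helix_def by blast
    have "U s \<bullet> d = \<sigma> * c" if s: "s \<in> I" for s
    proof -
      have "\<sigma> * (U s \<bullet> d) = c" using d(2)[OF s] unitT[OF s] by simp
      hence "\<sigma> * (\<sigma> * (U s \<bullet> d)) = \<sigma> * c" by simp
      thus ?thesis using sig2 by (simp add: mult.assoc[symmetric])
    qed
    thus "isophote I U" unfolding isophote_def using d(1) by blast
  next
    assume "isophote I U"
    then obtain l c where l: "norm l = 1" "\<And>s. s \<in> I \<Longrightarrow> U s \<bullet> l = c"
      unfolding isophote_def by blast
    have "\<forall>s\<in>I. \<gamma> differentiable (at s) \<and> vector_derivative \<gamma> (at s) \<noteq> 0"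
    proof
      fix s assume s: "s \<in> I"
      have "\<gamma> differentiable (at s)" by (rule differentiableI_vector[OF conjunct1[OF tangent[rule_format, OF s]]])
      moreover have "vector_derivative \<gamma> (at s) \<noteq> 0" using vd[OF s] Rnz[OF s] nU[OF s] by auto
      ultimately show "\<gamma> differentiable (at s) \<and> vector_derivative \<gamma> (at s) \<noteq> 0" by blast
    qed
    moreover have "\<forall>s\<in>I. (vector_derivative \<gamma> (at s) /\<^sub>R norm (vector_derivative \<gamma> (at s))) \<bullet> l = \<sigma> * c"
      using unitT l(2) by simp
    ultimately show "general_helix I \<gamma>" unfolding general_helix_def using l(1) by blast
  qed
  show ?thesis using A BC by blast
qed

end
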